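(* Let $m\ge 9$ be odd and let $\Delta\ge 1$ be an integer. There exists an $m$-$\gamma_t$-critical graph $G$ of order $\Delta(G)+m$ with $\Delta(G)=\Delta$ and $\delta(G)\ge 2$ if and only if $\Delta\ge m-1$.
   Context: All graphs are finite and simple; $\Delta(G)$, $\delta(G)$ are maximum and minimum degree. A set $S\subseteq V(G)$ is a total dominating set if every vertex of $G$ is adjacent to some vertex of $S$; $\gamma_t(G)$ is the minimum size of such a set. A leaf is a vertex of degree one. A graph $G$ with no isolated vertex is $\gamma_t$-critical if for every vertex $v$ not adjacent to a leaf, $\gamma_t(G-v)<\gamma_t(G)$; it is $m$-$\gamma_t$-critical if moreover $\gamma_t(G)=m$. *)

theory Defs
  imports Main
begin

definition simple_graph :: "'a set \<Rightarrow> ('a \<Rightarrow> 'a \<Rightarrow> bool) \<Rightarrow> bool" where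
  "simple_graph V E \<longleftrightarrow> finite V \<and> (\<forall>x y. E x y \<longrightarrow> x \<in> V \<and> y \<in> V)
     \<and> (\<forall>x y. E x y \<longrightarrow> E y x) \<and> (\<forall>x. \<not> E x x)"

definition degree :: "'a set \<Rightarrow> ('a \<Rightarrow> 'a \<Rightarrow> bool) \<Rightarrow> 'a \<Rightarrow> nat" where
  "degree V E v = card {u \<in> V. E v u}"

definition max_degree :: "'a set \<Rightarrow> ('a \<Rightarrow> 'a \<Rightarrow> bool) \<Rightarrow> nat" where
  "max_degree V E = Max (degree V E ` V)"

definition min_degree :: "'a set \<Rightarrow> ('a \<Rightarrow> 'a \<Rightarrow> bool) \<Rightarrow> nat" where
  "min_degree V E = Min (degree V E ` V)"

definition is_leaf :: "'a set \<Rightarrow> ('a \<Rightarrow> 'a \<Rightarrow> bool) \<Rightarrow> 'a \<Rightarrow> bool" where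
  "is_leaf V E v \<longleftrightarrow> v \<in> V \<and> degree V E v = 1"

definition no_isolated :: "'a set \<Rightarrow> ('a \<Rightarrow> 'a \<Rightarrow> bool) \<Rightarrow> bool" where
  "no_isolated V E \<longleftrightarrow> (\<forall>v\<in>V. \<exists>u\<in>V. E v u)"

definition total_dominating :: "'a set \<Rightarrow> ('a \<Rightarrow> 'a \<Rightarrow> bool) \<Rightarrow> 'a set \<Rightarrow> bool" where
  "total_dominating V E S \<longleftrightarrow> S \<subseteq> V \<and> (\<forall>v\<in>V. \<exists>u\<in>S. E v u)"

definition gamma_t :: "'a set \<Rightarrow> ('a \<Rightarrow> 'a \<Rightarrow> bool) \<Rightarrow> nat" where
  "gamma_t V E = (LEAST k. \<exists>S. total_dominating V E S \<and> card S = k)"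

definition del_vertex :: "'a set \<Rightarrow> ('a \<Rightarrow> 'a \<Rightarrow> bool) \<Rightarrow> 'a \<Rightarrow> 'a set \<times> ('a \<Rightarrow> 'a \<Rightarrow> bool)" where
  "del_vertex V E v = (V - {v}, \<lambda>x y. E x y \<and> x \<noteq> v \<and> y \<noteq> v)"

definition gamma_t_critical :: "'a set \<Rightarrow> ('a \<Rightarrow> 'a \<Rightarrow> bool) \<Rightarrow> bool" where
  "gamma_t_critical V E \<longleftrightarrow> no_isolated V E \<and>
     (\<forall>v\<in>V. (\<not> (\<exists>u. E v u \<and> is_leaf V E u)) \<longrightarrow>
        gamma_t (fst (del_vertex V E v)) (snd (del_vertex V E v)) < gamma_t V E)"

definition m_gamma_t_critical :: "nat \<Rightarrow> 'a set \<Rightarrow> ('a \<Rightarrow> 'a \<Rightarrow> bool) \<Rightarrow> bool" where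
  "m_gamma_t_critical m V E \<longleftrightarrow> gamma_t_critical V E \<and> gamma_t V E = m"

end

theory Submission
  imports Defs "HOL-Library.Countable"
begin


definition trE :: "('a \<Rightarrow> 'b) \<Rightarrow> ('a \<Rightarrow> 'a \<Rightarrow> bool) \<Rightarrow> 'b \<Rightarrow> 'b \<Rightarrow> bool" where
  "trE f E x y = (\<exists>a b. x = f a \<and> y = f b \<and> E a b)"

context fixes f :: "'a \<Rightarrow> 'b" assumes inj: "inj f"
begin

lemma trE_f[simp]: "trE f E (f a) (f b) = E a b"
  unfolding trE_def using inj by (auto dest: injD)

lemma td_tr: "total_dominating (f ` V) (trE f E) (f ` S) \<longleftrightarrow> total_dominating V E S"
  unfolding total_dominating_def using inj by (auto simp: inj_image_subset_iff)

lemma gamma_tr: "gamma_t (f ` V) (trE f E) = gamma_t V E"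
proof -
  have "\<And>k. (\<exists>S'. total_dominating (f ` V) (trE f E) S' \<and> card S' = k) \<longleftrightarrow> (\<exists>S. total_dominating V E S \<and> card S = k)"
  proof
    fix k
    assume "\<exists>S'. total_dominating (f ` V) (trE f E) S' \<and> card S' = k"
    then obtain S' where S': "total_dominating (f ` V) (trE f E) S'" "card S' = k" by blast
    then have "S' \<subseteq> f ` V" unfolding total_dominating_def by auto
    then have eq: "S' = f ` (f -` S')" by auto
    then have "total_dominating V E (f -` S')" using S' td_tr by metis
    moreover have "card (f -` S') = k" using S' eq inj by (metis card_image inj_on_subset subset_UNIV)
    ultimately show "\<exists>S. total_dominating V E S \<and> card S = k" by blast
  next
    fix k
    assume "\<exists>S. total_dominating V E S \<and> card S = k"
    then obtain S where "total_dominating V E S" "card S = k" by blast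
    then show "\<exists>S'. total_dominating (f ` V) (trE f E) S' \<and> card S' = k"
      using td_tr inj by (metis card_image inj_on_subset subset_UNIV)
  qed
  then show ?thesis unfolding gamma_t_def by simp
qed

lemma deg_tr: "degree (f ` V) (trE f E) (f a) = degree V E a"
proof -
  have "{u \<in> f ` V. trE f E (f a) u} = f ` {u\<in>V. E a u}" by auto
  then show ?thesis unfolding degree_def using inj by (simp add: card_image inj_on_subset)
qed

lemma degs_tr: "degree (f ` V) (trE f E) ` (f ` V) = degree V E ` V"
  using deg_tr by (auto simp: image_iff)

lemma sg_tr: "simple_graph V E \<Longrightarrow> simple_graph (f ` V) (trE f E)"
  unfolding simple_graph_def trE_def using inj by (auto dest: injD) blast

lemma del_tr: "del_vertex (f ` V) (trE f E) (f x) = (f ` (fst (del_vertex V E x)), trE f (snd (del_vertex V E x)))"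
  unfolding del_vertex_def using inj by (auto simp: trE_def fun_eq_iff image_set_diff dest: injD)

lemma crit_tr: "gamma_t_critical V E \<Longrightarrow> gamma_t_critical (f ` V) (trE f E)"
proof -
  assume c: "gamma_t_critical V E"
  have ni: "no_isolated (f ` V) (trE f E)" using c unfolding gamma_t_critical_def no_isolated_def by auto
  have leaf: "\<And>u. is_leaf (f ` V) (trE f E) (f u) = is_leaf V E u"
    unfolding is_leaf_def using deg_tr inj by (auto simp: inj_image_mem_iff)
  show ?thesis unfolding gamma_t_critical_def
  proof (intro conjI ni ballI impI)
    fix x' assume x': "x' \<in> f ` V" and nl: "\<not> (\<exists>u. trE f E x' u \<and> is_leaf (f ` V) (trE f E) u)"
    obtain x where x: "x \<in> V" "x' = f x" using x' by auto
    have "\<not> (\<exists>u. E x u \<and> is_leaf V E u)"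
    proof
      assume "\<exists>u. E x u \<and> is_leaf V E u"
      then obtain u where "E x u" "is_leaf V E u" by blast
      then have "trE f E x' (f u) \<and> is_leaf (f ` V) (trE f E) (f u)" using x leaf by simp
      then show False using nl by blast
    qed
    then have "gamma_t (fst (del_vertex V E x)) (snd (del_vertex V E x)) < gamma_t V E" using c x
      unfolding gamma_t_critical_def by blast
    then show "gamma_t (fst (del_vertex (f ` V) (trE f E) x')) (snd (del_vertex (f ` V) (trE f E) x')) < gamma_t (f ` V) (trE f E)"
      using x by (simp add: del_tr gamma_tr)
  qed
qed

end


lemma tds_card_ge:
  assumes "gamma_t V E = m" "total_dominating V E S"
  shows "m \<le> card S"
  using assms unfolding gamma_t_def by (metis (mono_tags, lifting) Least_le)

lemma keyL:
  assumes sg: "simple_graph V E" and gm: "gamma_t V E = m"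
    and vV: "v \<in> V" and deg: "\<And>x. x \<in> V \<Longrightarrow> \<exists>u. E x u"
    and cB: "card {x\<in>V. x \<noteq> v \<and> \<not> E v x} = m - 1"
    and TV: "T \<subseteq> V" and TA: "\<exists>a\<in>T. E v a" and fT: "finite T"
  shows "card {q\<in>V. q \<noteq> v \<and> \<not> E v q \<and> (\<exists>t\<in>T. E q t)} \<le> card T"
proof -
  define B where "B = {x\<in>V. x \<noteq> v \<and> \<not> E v x}"
  define Q where "Q = {q\<in>V. q \<noteq> v \<and> \<not> E v q \<and> (\<exists>t\<in>T. E q t)}"
  have fin: "finite V" using sg unfolding simple_graph_def by auto
  have QB: "Q \<subseteq> B" unfolding Q_def B_def by auto
  have fB: "finite B" using fin unfolding B_def by auto
  define nb where "nb = (\<lambda>x. SOME u. E x u)"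
  have nbE: "\<And>x. x \<in> V \<Longrightarrow> E x (nb x)" unfolding nb_def using deg by (metis someI_ex)
  define D where "D = insert v (T \<union> nb ` (B - Q))"
  have DV: "D \<subseteq> V" unfolding D_def using vV TV nbE sg unfolding simple_graph_def B_def by auto
  have td: "total_dominating V E D"
    unfolding total_dominating_def
  proof (intro conjI DV ballI)
    fix y assume y: "y \<in> V"
    show "\<exists>u\<in>D. E y u"
    proof (cases "y = v")
      case True then show ?thesis using TA unfolding D_def by auto
    next
      case False
      show ?thesis
      proof (cases "E v y")
        case True then have "E y v" using sg unfolding simple_graph_def by auto
        then show ?thesis unfolding D_def by auto
      next
        case nv: False
        show ?thesis
        proof (cases "y \<in> Q")
          case True then show ?thesis unfolding Q_def D_def by auto
        next
          case False
          then have "y \<in> B - Q" using y nv \<open>y \<noteq> v\<close> unfolding B_def by auto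
          then show ?thesis using nbE[OF y] unfolding D_def by auto
        qed
      qed
    qed
  qed
  have "m \<le> card D" using tds_card_ge[OF gm td] .
  also have "card D \<le> Suc (card (T \<union> nb ` (B - Q)))" unfolding D_def
    by (simp add: card_insert_le_m1 card_insert_if)
  also have "card (T \<union> nb ` (B - Q)) \<le> card T + card (nb ` (B - Q))" by (rule card_Un_le)
  also have "card (nb ` (B - Q)) \<le> card (B - Q)" using card_image_le fB by blast
  also have "card (B - Q) = card B - card Q" using QB fB by (meson card_Diff_subset finite_subset)
  finally have "m \<le> Suc (card T + (card B - card Q))" by simp
  moreover have "card B = m - 1" using cB B_def by simp
  moreover have "card Q \<le> card B" using QB fB card_mono by blast
  ultimately show ?thesis unfolding Q_def[symmetric] by linarith
qed



lemma only_if: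
  fixes V :: "'a set"
  assumes sg: "simple_graph V E" and cr: "m_gamma_t_critical m V E"
    and cV: "card V = max_degree V E + m" and md: "min_degree V E \<ge> 2" and m9: "m \<ge> 9"
  shows "max_degree V E \<ge> m - 1"
proof -
  have fin: "finite V" using sg unfolding simple_graph_def by auto
  have sym: "\<And>x y. E x y \<Longrightarrow> E y x" and irr: "\<And>x. \<not> E x x" and inV: "\<And>x y. E x y \<Longrightarrow> x \<in> V \<and> y \<in> V"
    using sg unfolding simple_graph_def by auto
  have Vne: "V \<noteq> {}" using cV m9 by auto
  have gm: "gamma_t V E = m" using cr unfolding m_gamma_t_critical_def by auto
  obtain v where vV: "v \<in> V" and dv: "degree V E v = max_degree V E"
  proof -
    have "Max (degree V E ` V) \<in> degree V E ` V" using Max_in[of "degree V E ` V"] fin Vne by auto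
    then show ?thesis using that unfolding max_degree_def by auto
  qed
  have dge2: "\<And>x. x \<in> V \<Longrightarrow> 2 \<le> degree V E x"
    using md fin unfolding min_degree_def by (meson Min_le dual_order.trans finite_imageI image_eqI)
  have two: "\<And>x. x \<in> V \<Longrightarrow> \<exists>u1 u2. E x u1 \<and> E x u2 \<and> u1 \<noteq> u2"
  proof -
    fix x assume x: "x \<in> V"
    have "2 \<le> card {u\<in>V. E x u}" using dge2[OF x] unfolding degree_def .
    then have "\<not> card {u\<in>V. E x u} \<le> Suc 0" by simp
    then obtain u1 u2 where "u1 \<in> {u\<in>V. E x u}" "u2 \<in> {u\<in>V. E x u}" "u1 \<noteq> u2"
      using card_le_Suc0_iff_eq[of "{u\<in>V. E x u}"] fin by auto
    then show "\<exists>u1 u2. E x u1 \<and> E x u2 \<and> u1 \<noteq> u2" by auto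
  qed
  have deg: "\<And>x. x \<in> V \<Longrightarrow> \<exists>u. E x u" using two by blast
  define A where "A = {u\<in>V. E v u}"
  define B where "B = {x\<in>V. x \<noteq> v \<and> \<not> E v x}"
  have cA: "card A = max_degree V E" using dv unfolding A_def degree_def by simp
  have VABv: "V = insert v (A \<union> B)" and disj: "v \<notin> A" "v \<notin> B" "A \<inter> B = {}"
    using vV irr unfolding A_def B_def by auto
  have fA: "finite A" and fB: "finite B" using fin unfolding A_def B_def by auto
  have "card V = Suc (card A + card B)"
    using VABv disj fA fB by (simp add: card_Un_disjoint)
  then have cB: "card B = m - 1" using cA cV by simp
  have cB': "card {x\<in>V. x \<noteq> v \<and> \<not> E v x} = m - 1" using cB unfolding B_def .
  have L: "\<And>T. T \<subseteq> V \<Longrightarrow> (\<exists>a\<in>T. a \<in> A) \<Longrightarrow> finite T \<Longrightarrow> card {q\<in>B. (\<exists>t\<in>T. E q t)} \<le> card T"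
  proof -
    fix T assume "T \<subseteq> V" "\<exists>a\<in>T. a \<in> A" "finite T"
    then have "card {q\<in>V. q \<noteq> v \<and> \<not> E v q \<and> (\<exists>t\<in>T. E q t)} \<le> card T"
      using keyL[OF sg gm vV deg cB'] unfolding A_def by auto
    moreover have "{q\<in>V. q \<noteq> v \<and> \<not> E v q \<and> (\<exists>t\<in>T. E q t)} = {q\<in>B. (\<exists>t\<in>T. E q t)}"
      unfolding B_def by auto
    ultimately show "card {q\<in>B. (\<exists>t\<in>T. E q t)} \<le> card T" by simp
  qed
  have noleaf: "\<not> (\<exists>u. E v u \<and> is_leaf V E u)"
    using dge2 unfolding is_leaf_def by fastforce
  have crit: "gamma_t (V - {v}) (\<lambda>x y. E x y \<and> x \<noteq> v \<and> y \<noteq> v) < m"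
    using cr vV noleaf gm unfolding m_gamma_t_critical_def gamma_t_critical_def del_vertex_def by auto
  define E' where "E' = (\<lambda>x y. E x y \<and> x \<noteq> v \<and> y \<noteq> v)"
  have ex: "\<exists>S. total_dominating (V - {v}) E' S \<and> card S = card (V - {v})"
  proof (intro exI conjI)
    show "total_dominating (V - {v}) E' (V - {v})"
      unfolding total_dominating_def E'_def
    proof (intro conjI ballI subset_refl)
      fix y assume y: "y \<in> V - {v}"
      obtain u1 u2 where "E y u1" "E y u2" "u1 \<noteq> u2" using two y by blast
      then show "\<exists>u\<in>V - {v}. E y u \<and> y \<noteq> v \<and> u \<noteq> v" proof (cases "u1 = v")
        case True then show ?thesis using \<open>E y u2\<close> \<open>u1 \<noteq> u2\<close> y inV by blast
      next
        case False then show ?thesis using \<open>E y u1\<close> y inV by blast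
      qed
    qed
  qed simp
  obtain S0 where S0: "total_dominating (V - {v}) E' S0" and cS0: "card S0 = gamma_t (V - {v}) E'"
  proof -
    have "\<exists>k. \<exists>S. total_dominating (V - {v}) E' S \<and> card S = k" using ex by blast
    from LeastI_ex[OF this] show ?thesis using that unfolding gamma_t_def by blast
  qed
  have S0B: "S0 \<subseteq> B"
  proof
    fix s assume s: "s \<in> S0"
    have sV: "s \<in> V" "s \<noteq> v" using S0 s unfolding total_dominating_def by auto
    show "s \<in> B"
    proof (rule ccontr)
      assume "s \<notin> B"
      then have sA: "E v s" using sV unfolding B_def by auto
      have "total_dominating V E S0"
        unfolding total_dominating_def
      proof (intro conjI ballI)
        show "S0 \<subseteq> V" using S0 unfolding total_dominating_def by auto
        fix y assume y: "y \<in> V"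
        show "\<exists>u\<in>S0. E y u"
        proof (cases "y = v")
          case True then show ?thesis using sA s by auto
        next
          case False then show ?thesis using S0 y unfolding total_dominating_def E'_def by auto
        qed
      qed
      then have "m \<le> card S0" using tds_card_ge[OF gm] by blast
      then show False using crit cS0 unfolding E'_def by simp
    qed
  qed
  have AB: "\<And>a. a \<in> A \<Longrightarrow> \<exists>b\<in>B. E a b"
  proof -
    fix a assume a: "a \<in> A"
    then have "a \<in> V - {v}" using disj by (auto simp: A_def)
    then obtain u where "u \<in> S0" "E' a u" using S0 unfolding total_dominating_def by auto
    then show "\<exists>b\<in>B. E a b" using S0B unfolding E'_def by auto
  qed
  have uniq: "\<And>a b b'. a \<in> A \<Longrightarrow> b \<in> B \<Longrightarrow> b' \<in> B \<Longrightarrow> E a b \<Longrightarrow> E a b' \<Longrightarrow> b = b'"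
  proof (rule ccontr)
    fix a b b' assume a: "a \<in> A" "b \<in> B" "b' \<in> B" "E a b" "E a b'" "b \<noteq> b'"
    have "{b, b'} \<subseteq> {q\<in>B. (\<exists>t\<in>{a}. E q t)}" using a sym by auto
    then have "card {b,b'} \<le> card {q\<in>B. (\<exists>t\<in>{a}. E q t)}" using fB by (intro card_mono) auto
    also have "\<dots> \<le> card {a}" using L[of "{a}"] a inV by auto
    finally show False using a by simp
  qed
  have BA: "\<And>b. b \<in> B \<Longrightarrow> \<exists>a\<in>A. E b a"
  proof (rule ccontr)
    fix b0 assume b0: "b0 \<in> B" and nA: "\<not> (\<exists>a\<in>A. E b0 a)"
    define N0 where "N0 = {u. E b0 u}"
    have N0B: "N0 \<subseteq> B"
    proof
      fix u assume "u \<in> N0"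
      then have "E b0 u" unfolding N0_def by simp
      then show "u \<in> B" using nA b0 inV sym unfolding A_def B_def by auto
    qed
    have fN0: "finite N0" using N0B fB finite_subset by blast
    obtain u1 u2 where u: "E b0 u1" "E b0 u2" "u1 \<noteq> u2" using two b0 unfolding B_def by blast
    have cN0: "2 \<le> card N0"
    proof -
      have "card {u1,u2} \<le> card N0" using fN0 u by (intro card_mono) (auto simp: N0_def)
      then show ?thesis using u by simp
    qed
    have "A \<noteq> {}" using cA cV cB m9 dge2[OF vV] dv by auto
    then obtain a where a: "a \<in> A" by blast
    obtain w where w: "w \<in> B" "E a w" using AB[OF a] by blast
    have aV: "a \<in> V" using a unfolding A_def by auto
    have b0V: "b0 \<in> V" using b0 unfolding B_def by auto
    have "insert w N0 \<subseteq> {q\<in>B. (\<exists>t\<in>{a,b0}. E q t)}" using w N0B sym unfolding N0_def by auto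
    then have "card (insert w N0) \<le> card {q\<in>B. (\<exists>t\<in>{a,b0}. E q t)}" using fB by (intro card_mono) auto
    also have "\<dots> \<le> card {a,b0}" using L[of "{a,b0}"] a aV b0V by auto
    also have "\<dots> \<le> 2" by (simp add: card_insert_le_m1 card_insert_if)
    finally have c1: "card (insert w N0) \<le> 2" .
    have wN0: "w \<in> N0"
    proof (rule ccontr)
      assume "w \<notin> N0" then have "card (insert w N0) = Suc (card N0)" using fN0 by simp
      then show False using c1 cN0 by simp
    qed
    have cN0': "card N0 \<le> 2" using c1 by (metis card_insert_le dual_order.trans fN0)
    have wonly: "\<And>x. x \<in> B \<Longrightarrow> E w x \<Longrightarrow> x = b0"
    proof (rule ccontr)
      fix x assume x: "x \<in> B" "E w x" "x \<noteq> b0"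
      have wb0: "E w b0" using wN0 sym unfolding N0_def by auto
      have "{w, b0, x} \<subseteq> {q\<in>B. (\<exists>t\<in>{a,w}. E q t)}" using w x wb0 sym b0 by auto
      then have "card {w, b0, x} \<le> card {q\<in>B. (\<exists>t\<in>{a,w}. E q t)}" using fB by (intro card_mono) auto
      also have "\<dots> \<le> card {a,w}" using L[of "{a,w}"] a aV w unfolding B_def by auto
      also have "\<dots> \<le> 2" by (simp add: card_insert_le_m1 card_insert_if)
      finally have "card {w, b0, x} \<le> 2" .
      moreover have "w \<noteq> b0" using wb0 irr by auto
      moreover have "w \<noteq> x" using x irr by auto
      ultimately show False using x by simp
    qed
    have "card (insert b0 (insert w N0)) \<le> 3" using c1 by (metis card_insert_le_m1 le_trans not_less_eq_eq numeral_3_eq_3 numeral_2_eq_2 card_insert_if finite_insert fN0 nat_le_linear)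
    then have "card (insert b0 (insert w N0)) < card B" using cB m9 by simp
    then obtain x where x: "x \<in> B" "x \<notin> insert b0 (insert w N0)"
    proof -
      have "\<not> B \<subseteq> insert b0 (insert w N0)"
        using card_mono[of "insert b0 (insert w N0)" B] fN0 \<open>card (insert b0 (insert w N0)) < card B\<close> by auto
      then show ?thesis using that by blast
    qed
    show False
    proof (cases "\<exists>a'\<in>A. E x a'")
      case True
      then obtain a' where a': "a' \<in> A" "E x a'" by blast
      have a'V: "a' \<in> V" using a' unfolding A_def by auto
      have "insert x N0 \<subseteq> {q\<in>B. (\<exists>t\<in>{a',b0}. E q t)}" using x a' N0B sym unfolding N0_def by auto
      then have "card (insert x N0) \<le> card {q\<in>B. (\<exists>t\<in>{a',b0}. E q t)}" using fB by (intro card_mono) auto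
      also have "\<dots> \<le> card {a',b0}" using L[of "{a',b0}"] a' a'V b0V by auto
      also have "\<dots> \<le> 2" by (simp add: card_insert_le_m1 card_insert_if)
      finally have "card (insert x N0) \<le> 2" .
      moreover have "card (insert x N0) = Suc (card N0)" using x fN0 by simp
      ultimately show False using cN0 by simp
    next
      case False
      define Nx where "Nx = {u. E x u}"
      have NxB: "Nx \<subseteq> B"
      proof
        fix u assume "u \<in> Nx"
        then have "E x u" unfolding Nx_def by simp
        then show "u \<in> B" using False x inV sym unfolding A_def B_def by auto
      qed
      have fNx: "finite Nx" using NxB fB finite_subset by blast
      obtain y1 y2 where y: "E x y1" "E x y2" "y1 \<noteq> y2" using two x unfolding B_def by blast
      have cNx: "2 \<le> card Nx"
      proof -
        have "card {y1,y2} \<le> card Nx" using fNx y by (intro card_mono) (auto simp: Nx_def)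
        then show ?thesis using y by simp
      qed
      have xV: "x \<in> V" using x unfolding B_def by auto
      have "insert w Nx \<subseteq> {q\<in>B. (\<exists>t\<in>{a,x}. E q t)}" using w NxB sym unfolding Nx_def by auto
      then have "card (insert w Nx) \<le> card {q\<in>B. (\<exists>t\<in>{a,x}. E q t)}" using fB by (intro card_mono) auto
      also have "\<dots> \<le> card {a,x}" using L[of "{a,x}"] a aV xV by auto
      also have "\<dots> \<le> 2" by (simp add: card_insert_le_m1 card_insert_if)
      finally have c2: "card (insert w Nx) \<le> 2" .
      have "w \<in> Nx"
      proof (rule ccontr)
        assume "w \<notin> Nx" then have "card (insert w Nx) = Suc (card Nx)" using fNx by simp
        then show False using c2 cNx by simp
      qed
      then have "E w x" using sym unfolding Nx_def by auto
      then show False using wonly x by auto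
    qed
  qed
  define g where "g = (\<lambda>b. SOME a. a \<in> A \<and> E b a)"
  have g: "\<And>b. b \<in> B \<Longrightarrow> g b \<in> A \<and> E b (g b)" unfolding g_def using BA by (metis (mono_tags, lifting) someI_ex)
  have "inj_on g B"
  proof (rule inj_onI)
    fix b b' assume "b \<in> B" "b' \<in> B" "g b = g b'"
    then show "b = b'" using g[of b] g[of b'] uniq[of "g b" b b'] sym by auto
  qed
  then have "card B \<le> card A" using g fA by (metis card_inj_on_le image_subsetI)
  then show ?thesis using cA cB by simp
qed



datatype vtx = Vv | Zv | Bv nat | Cv nat | Pv nat | Qv nat | Xv nat | Yv nat

fun inV :: "nat \<Rightarrow> nat \<Rightarrow> bool \<Rightarrow> vtx \<Rightarrow> bool" where
  "inV K t d Vv = True"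
| "inV K t d Zv = d"
| "inV K t d (Bv i) = (i \<le> K)"
| "inV K t d (Cv i) = (i \<le> K)"
| "inV K t d (Pv i) = (i < K)"
| "inV K t d (Qv i) = (i < K)"
| "inV K t d (Xv i) = (i < t)"
| "inV K t d (Yv i) = (i < t)"

fun R :: "nat \<Rightarrow> bool \<Rightarrow> vtx \<Rightarrow> vtx \<Rightarrow> bool" where
  "R K d Vv y = (case y of Pv _ \<Rightarrow> True | Qv _ \<Rightarrow> True | Xv _ \<Rightarrow> True | Yv _ \<Rightarrow> True | Zv \<Rightarrow> True | _ \<Rightarrow> False)"
| "R K d (Bv i) y = (y = Cv i \<or> (i < K \<and> y = Pv i) \<or> (i = K \<and> (\<exists>j. y = Xv j)) \<or> (d \<and> i = 0 \<and> y = Zv))"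
| "R K d (Cv i) y = ((i < K \<and> y = Qv i) \<or> (i = K \<and> (\<exists>j. y = Yv j)))"
| "R K d (Xv i) y = ((\<exists>j. j \<noteq> i \<and> y = Yv j) \<or> (d \<and> y = Zv))"
| "R K d (Yv i) y = (d \<and> y = Zv)"
| "R K d (Qv i) y = (d \<and> i = 0 \<and> (y = Pv 1 \<or> y = Qv 1))"
| "R K d (Pv i) y = (d \<and> i = 0 \<and> (y = Pv 2 \<or> y = Qv 2))"
| "R K d Zv y = False"

definition VS :: "nat \<Rightarrow> nat \<Rightarrow> bool \<Rightarrow> vtx set" where
  "VS K t d = {x. inV K t d x}"

definition EE :: "nat \<Rightarrow> nat \<Rightarrow> bool \<Rightarrow> vtx \<Rightarrow> vtx \<Rightarrow> bool" where
  "EE K t d x y = (inV K t d x \<and> inV K t d y \<and> (R K d x y \<or> R K d y x))"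

lemma EG_Vv: "EE K t d Vv y \<longleftrightarrow> (\<exists>i<K. y = Pv i) \<or> (\<exists>i<K. y = Qv i) \<or> (\<exists>j<t. y = Xv j) \<or> (\<exists>j<t. y = Yv j) \<or> (d \<and> y = Zv)"
  by (cases y) (auto simp: EE_def)

lemma EG_Zv: "EE K t d Zv y \<longleftrightarrow> d \<and> (y = Vv \<or> y = Bv 0 \<or> (\<exists>j<t. y = Xv j) \<or> (\<exists>j<t. y = Yv j))"
  by (cases y) (auto simp: EE_def)

lemma EG_Bv: assumes "3 \<le> K" shows "EE K t d (Bv i) y \<longleftrightarrow> i \<le> K \<and> (y = Cv i \<or> (i < K \<and> y = Pv i) \<or> (i = K \<and> (\<exists>j<t. y = Xv j)) \<or> (d \<and> i = 0 \<and> y = Zv))"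
  using assms by (cases y) (auto simp: EE_def)

lemma EG_Cv: assumes "3 \<le> K" shows "EE K t d (Cv i) y \<longleftrightarrow> i \<le> K \<and> (y = Bv i \<or> (i < K \<and> y = Qv i) \<or> (i = K \<and> (\<exists>j<t. y = Yv j)))"
  using assms by (cases y) (auto simp: EE_def)

lemma EG_Pv: assumes "3 \<le> K" shows "EE K t d (Pv i) y \<longleftrightarrow> i < K \<and> (y = Vv \<or> y = Bv i \<or> (d \<and> i = 0 \<and> (y = Pv 2 \<or> y = Qv 2)) \<or> (d \<and> i = 1 \<and> y = Qv 0) \<or> (d \<and> i = 2 \<and> y = Pv 0))"
  using assms by (cases y) (auto simp: EE_def)

lemma EG_Qv: assumes "3 \<le> K" shows "EE K t d (Qv i) y \<longleftrightarrow> i < K \<and> (y = Vv \<or> y = Cv i \<or> (d \<and> i = 0 \<and> (y = Pv 1 \<or> y = Qv 1)) \<or> (d \<and> i = 1 \<and> y = Qv 0) \<or> (d \<and> i = 2 \<and> y = Pv 0))"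
  using assms by (cases y) (auto simp: EE_def)

lemma EG_Xv: "EE K t d (Xv i) y \<longleftrightarrow> i < t \<and> (y = Vv \<or> y = Bv K \<or> (\<exists>j<t. j \<noteq> i \<and> y = Yv j) \<or> (d \<and> y = Zv))"
  by (cases y) (auto simp: EE_def)

lemma EG_Yv: "EE K t d (Yv i) y \<longleftrightarrow> i < t \<and> (y = Vv \<or> y = Cv K \<or> (\<exists>j<t. j \<noteq> i \<and> y = Xv j) \<or> (d \<and> y = Zv))"
  by (cases y) (auto simp: EE_def)

locale cons =
  fixes K t :: nat and d :: bool
  assumes K3: "K \<ge> 3" and t1: "t \<ge> 1"
begin

abbreviation "E \<equiv> EE K t d"
abbreviation "V \<equiv> VS K t d"

lemmas E_Vv = EG_Vv
lemmas E_Zv = EG_Zv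
lemmas E_Bv = EG_Bv[OF K3]
lemmas E_Cv = EG_Cv[OF K3]
lemmas E_Pv = EG_Pv[OF K3]
lemmas E_Qv = EG_Qv[OF K3]
lemmas E_Xv = EG_Xv
lemmas E_Yv = EG_Yv
lemmas E_simps = E_Vv E_Zv E_Bv E_Cv E_Pv E_Qv E_Xv E_Yv

end


context cons begin

definition "Zs = (if d then {Zv} else {})"
definition "BC = Bv ` {..K} \<union> Cv ` {..K}"
definition "AA = Zs \<union> (Pv ` {..<K} \<union> (Qv ` {..<K} \<union> (Xv ` {..<t} \<union> Yv ` {..<t})))"
definition "Dl = 2*K + 2*t + (if d then 1 else 0)"

lemma V_eq: "V = insert Vv (AA \<union> BC)"
  unfolding VS_def AA_def BC_def Zs_def
  apply (rule set_eqI) subgoal for x by (cases x) auto done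

lemma finV: "finite V" unfolding V_eq AA_def BC_def Zs_def by auto

lemma cardAA: "card AA = Dl"
proof -
  have c1: "card (Xv ` {..<t} \<union> Yv ` {..<t}) = t + t"
    by (subst card_Un_disjoint) (auto simp: card_image inj_on_def)
  have c2: "card (Qv ` {..<K} \<union> (Xv ` {..<t} \<union> Yv ` {..<t})) = K + (t + t)"
    by (subst card_Un_disjoint) (auto simp: card_image inj_on_def c1)
  have c3: "card (Pv ` {..<K} \<union> (Qv ` {..<K} \<union> (Xv ` {..<t} \<union> Yv ` {..<t}))) = K + (K + (t + t))"
    by (subst card_Un_disjoint) (auto simp: card_image inj_on_def c2)
  have "card AA = card Zs + (K + (K + (t + t)))"
    unfolding AA_def by (subst card_Un_disjoint) (auto simp: Zs_def c3)
  then show ?thesis unfolding Dl_def Zs_def by auto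
qed

lemma cardBC: "card BC = 2*K + 2"
  unfolding BC_def by (subst card_Un_disjoint) (auto simp: card_image inj_on_def)

lemma cardV: "card V = Dl + (2*K + 3)"
proof -
  have "AA \<inter> BC = {}" unfolding AA_def BC_def Zs_def by auto
  moreover have "Vv \<notin> AA \<union> BC" unfolding AA_def BC_def Zs_def by auto
  moreover have "finite AA" "finite BC" unfolding AA_def BC_def Zs_def by auto
  ultimately have "card V = Suc (card AA + card BC)" unfolding V_eq by (simp add: card_Un_disjoint)
  then show ?thesis using cardAA cardBC by simp
qed

lemma NVv: "{y \<in> V. E Vv y} = AA"
  unfolding VS_def AA_def Zs_def E_Vv
  apply (rule set_eqI) subgoal for x by (cases x) auto done

lemma deg_Vv: "degree V E Vv = Dl" unfolding degree_def NVv cardAA ..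

lemma sg: "simple_graph V E"
proof -
  have "\<And>x. \<not> E x x" subgoal for x by (cases x) (auto simp: EE_def) done
  then show ?thesis unfolding simple_graph_def using finV by (auto simp: EE_def VS_def)
qed

end


context cons begin

fun Sm :: "vtx \<Rightarrow> vtx list" where
  "Sm Vv = []"
| "Sm Zv = [Vv, Bv 0]"
| "Sm (Bv i) = [Cv i, Pv i, Zv]"
| "Sm (Cv i) = [Bv i, Qv i]"
| "Sm (Pv i) = [Vv, Bv i, Qv 0, Pv 0, Pv 2, Qv 2]"
| "Sm (Qv i) = [Vv, Cv i, Qv 0, Pv 1, Qv 1, Pv 0]"
| "Sm (Xv i) = [Vv, Bv K, Cv K, Zv]"
| "Sm (Yv i) = [Vv, Bv K, Cv K, Zv]"

lemma N_sub: "x \<noteq> Vv \<Longrightarrow> {y \<in> V. E x y} \<subseteq> set (Sm x) \<union> (Xv ` {..<t} \<union> Yv ` {..<t})"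
  by (cases x) (auto simp: E_simps)

lemma deg_le: assumes "x \<noteq> Vv" shows "degree V E x \<le> Dl"
proof -
  have "degree V E x \<le> card (set (Sm x) \<union> (Xv ` {..<t} \<union> Yv ` {..<t}))"
    unfolding degree_def by (rule card_mono) (use N_sub[OF assms] in auto)
  also have "\<dots> \<le> card (set (Sm x)) + card (Xv ` {..<t} \<union> Yv ` {..<t})" by (rule card_Un_le)
  also have "card (set (Sm x)) \<le> 6" using card_length[of "Sm x"] by (cases x) auto
  also have "card (Xv ` {..<t} \<union> Yv ` {..<t}) \<le> t + t"
    by (metis card_Un_le card_image_le card_lessThan finite_lessThan add_mono order_trans)
  finally show ?thesis unfolding Dl_def using K3 by simp
qed

lemma two_nb_aux: "x \<in> V \<Longrightarrow> E x a \<Longrightarrow> E x b \<Longrightarrow> a \<noteq> b \<Longrightarrow> \<exists>u1 u2. E x u1 \<and> E x u2 \<and> u1 \<noteq> u2"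
  by blast

lemma two_nb: "x \<in> V \<Longrightarrow> \<exists>u1 u2. E x u1 \<and> E x u2 \<and> u1 \<noteq> u2"
proof (cases x)
  case Vv
  have "E Vv (Pv 0)" "E Vv (Qv 0)" using K3 by (auto simp: E_simps)
  then show ?thesis using Vv by blast
next
  case Zv
  show "x \<in> V \<Longrightarrow> ?thesis"
  proof -
    assume "x \<in> V" then have "d" using Zv by (simp add: VS_def)
    then have "E Zv Vv \<and> E Zv (Bv 0)" unfolding E_Zv by simp
    then show ?thesis using Zv by blast
  qed
next
  case (Bv i) show "x \<in> V \<Longrightarrow> ?thesis"
  proof -
    assume "x \<in> V" then have i: "i \<le> K" using Bv by (simp add: VS_def)
    show ?thesis
    proof (cases "i < K")
      case True
      then have "E (Bv i) (Cv i) \<and> E (Bv i) (Pv i)" unfolding E_Bv by simp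
      then show ?thesis using Bv by blast
    next
      case False
      then have "E (Bv i) (Cv i) \<and> E (Bv i) (Xv 0)" unfolding E_Bv using i t1 by simp
      then show ?thesis using Bv by blast
    qed
  qed
next
  case (Cv i) show "x \<in> V \<Longrightarrow> ?thesis"
  proof -
    assume "x \<in> V" then have i: "i \<le> K" using Cv by (simp add: VS_def)
    show ?thesis
    proof (cases "i < K")
      case True
      then have "E (Cv i) (Bv i) \<and> E (Cv i) (Qv i)" unfolding E_Cv by simp
      then show ?thesis using Cv by blast
    next
      case False
      then have "E (Cv i) (Bv i) \<and> E (Cv i) (Yv 0)" unfolding E_Cv using i t1 by simp
      then show ?thesis using Cv by blast
    qed
  qed
next
  case (Pv i) show "x \<in> V \<Longrightarrow> ?thesis"
  proof -
    assume "x \<in> V" then have "i < K" using Pv by (simp add: VS_def)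
    then have "E (Pv i) Vv \<and> E (Pv i) (Bv i)" unfolding E_Pv by simp
    then show ?thesis using Pv by blast
  qed
next
  case (Qv i) show "x \<in> V \<Longrightarrow> ?thesis"
  proof -
    assume "x \<in> V" then have "i < K" using Qv by (simp add: VS_def)
    then have "E (Qv i) Vv \<and> E (Qv i) (Cv i)" unfolding E_Qv by simp
    then show ?thesis using Qv by blast
  qed
next
  case (Xv i) show "x \<in> V \<Longrightarrow> ?thesis"
  proof -
    assume "x \<in> V" then have "i < t" using Xv by (simp add: VS_def)
    then have "E (Xv i) Vv \<and> E (Xv i) (Bv K)" unfolding E_Xv by simp
    then show ?thesis using Xv by blast
  qed
next
  case (Yv i) show "x \<in> V \<Longrightarrow> ?thesis"
  proof -
    assume "x \<in> V" then have "i < t" using Yv by (simp add: VS_def)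
    then have "E (Yv i) Vv \<and> E (Yv i) (Cv K)" unfolding E_Yv by simp
    then show ?thesis using Yv by blast
  qed
qed

lemma deg_ge2: assumes "x \<in> V" shows "2 \<le> degree V E x"
proof -
  obtain u1 u2 where u: "E x u1" "E x u2" "u1 \<noteq> u2" using two_nb[OF assms] by blast
  have "card {u1, u2} \<le> degree V E x" unfolding degree_def
    by (rule card_mono) (use finV u sg in \<open>auto simp: simple_graph_def\<close>)
  then show ?thesis using u by simp
qed

lemma maxdeg: "max_degree V E = Dl"
  unfolding max_degree_def
proof (rule Max_eqI)
  show "finite (degree V E ` V)" using finV by simp
  show "Dl \<in> degree V E ` V" using deg_Vv by (metis VS_def image_eqI inV.simps(1) mem_Collect_eq)
  fix y assume "y \<in> degree V E ` V"
  then obtain x where "y = degree V E x" by auto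
  then show "y \<le> Dl" using deg_le deg_Vv by (cases "x = Vv") auto
qed

lemma mindeg: "2 \<le> min_degree V E"
  unfolding min_degree_def using finV deg_ge2
  by (subst Min_ge_iff) (auto simp: VS_def intro: exI[of _ Vv])

end


context cons begin

lemma Esym: "E x y \<Longrightarrow> E y x" by (auto simp: EE_def)

lemma uniqBC: assumes "w \<in> BC" "w' \<in> BC" "E w u" "E w' u" shows "w = w'"
proof -
  have "E u w" "E u w'" using assms Esym by auto
  note h = this
  show ?thesis
  proof (cases u)
    case Vv
    with h have "E Vv w \<and> E Vv w'" by simp
    then show ?thesis unfolding E_Vv using assms(1,2) by (auto simp: BC_def)
  next
    case Zv
    with h have "E Zv w \<and> E Zv w'" by simp
    then show ?thesis unfolding E_Zv using assms(1,2) by (auto simp: BC_def)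
  next
    case (Bv i)
    with h have "E (Bv i) w \<and> E (Bv i) w'" by simp
    then show ?thesis unfolding E_Bv using assms(1,2) by (auto simp: BC_def)
  next
    case (Cv i)
    with h have "E (Cv i) w \<and> E (Cv i) w'" by simp
    then show ?thesis unfolding E_Cv using assms(1,2) by (auto simp: BC_def)
  next
    case (Pv i)
    with h have "E (Pv i) w \<and> E (Pv i) w'" by simp
    then show ?thesis unfolding E_Pv using assms(1,2) by (auto simp: BC_def)
  next
    case (Qv i)
    with h have "E (Qv i) w \<and> E (Qv i) w'" by simp
    then show ?thesis unfolding E_Qv using assms(1,2) by (auto simp: BC_def)
  next
    case (Xv i)
    with h have "E (Xv i) w \<and> E (Xv i) w'" by simp
    then show ?thesis unfolding E_Xv using assms(1,2) by (auto simp: BC_def)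
  next
    case (Yv i)
    with h have "E (Yv i) w \<and> E (Yv i) w'" by simp
    then show ?thesis unfolding E_Yv using assms(1,2) by (auto simp: BC_def)
  qed
qed

lemma no_small:
  assumes SV: "S \<subseteq> V" and nV: "Vv \<notin> S"
    and one: "\<And>w u1 u2. w \<in> BC \<Longrightarrow> u1 \<in> S \<Longrightarrow> u2 \<in> S \<Longrightarrow> E w u1 \<Longrightarrow> E w u2 \<Longrightarrow> u1 = u2"
    and dom: "\<And>y. y \<in> V \<Longrightarrow> \<exists>u\<in>S. E y u"
  shows False
proof -
  have inV: "\<And>i. i \<le> K \<Longrightarrow> Bv i \<in> V \<and> Cv i \<in> V" "\<And>i. i < K \<Longrightarrow> Pv i \<in> V \<and> Qv i \<in> V"
    "\<And>j. j < t \<Longrightarrow> Xv j \<in> V \<and> Yv j \<in> V" "Vv \<in> V" by (auto simp: VS_def)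
  have inBC: "\<And>i. i \<le> K \<Longrightarrow> Bv i \<in> BC \<and> Cv i \<in> BC" by (auto simp: BC_def)
  have oneB: "\<And>i u1 u2. i \<le> K \<Longrightarrow> u1 \<in> S \<Longrightarrow> u2 \<in> S \<Longrightarrow> E (Bv i) u1 \<Longrightarrow> E (Bv i) u2 \<Longrightarrow> u1 = u2"
    using one inBC by blast
  have oneC: "\<And>i u1 u2. i \<le> K \<Longrightarrow> u1 \<in> S \<Longrightarrow> u2 \<in> S \<Longrightarrow> E (Cv i) u1 \<Longrightarrow> E (Cv i) u2 \<Longrightarrow> u1 = u2"
    using one inBC by blast
  have st1: "\<And>i. i < K \<Longrightarrow> (\<not> d \<or> 3 \<le> i) \<Longrightarrow> Pv i \<notin> S \<and> Qv i \<notin> S"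
  proof -
    fix i assume i: "i < K" "\<not> d \<or> 3 \<le> i"
    obtain u where u: "u \<in> S" "E (Pv i) u" using dom inV(2)[OF i(1)] by blast
    have bS: "Bv i \<in> S" using u i nV unfolding E_Pv by auto
    obtain u' where u': "u' \<in> S" "E (Qv i) u'" using dom inV(2)[OF i(1)] by blast
    have cS: "Cv i \<in> S" using u' i nV unfolding E_Qv by auto
    have "Pv i \<notin> S"
    proof
      assume "Pv i \<in> S"
      moreover have "E (Bv i) (Pv i)" "E (Bv i) (Cv i)" using i unfolding E_Bv by auto
      ultimately show False using oneB[of i "Pv i" "Cv i"] cS i by auto
    qed
    moreover have "Qv i \<notin> S"
    proof
      assume "Qv i \<in> S"
      moreover have "E (Cv i) (Qv i)" "E (Cv i) (Bv i)" using i unfolding E_Cv by auto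
      ultimately show False using oneC[of i "Qv i" "Bv i"] bS i by auto
    qed
    ultimately show "Pv i \<notin> S \<and> Qv i \<notin> S" by blast
  qed
  have st2X: "\<And>j. j < t \<Longrightarrow> Xv j \<in> S \<Longrightarrow> Zv \<in> S"
  proof -
    fix j assume j: "j < t" "Xv j \<in> S"
    obtain u where u: "u \<in> S" "E (Yv j) u" using dom inV(3)[OF j(1)] by blast
    have bx: "E (Bv K) (Xv j)" using j unfolding E_Bv by auto
    have "u \<noteq> Cv K"
    proof
      assume "u = Cv K"
      moreover have "E (Bv K) (Cv K)" unfolding E_Bv by auto
      ultimately show False using oneB[of K "Cv K" "Xv j"] u j bx by auto
    qed
    moreover have "\<And>i. i < t \<Longrightarrow> i \<noteq> j \<Longrightarrow> u \<noteq> Xv i"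
    proof
      fix i assume i: "i < t" "i \<noteq> j" "u = Xv i"
      moreover have "E (Bv K) (Xv i)" using i unfolding E_Bv by auto
      ultimately show False using oneB[of K "Xv i" "Xv j"] u j bx by auto
    qed
    ultimately show "Zv \<in> S" using u nV unfolding E_Yv by auto
  qed
  have st2Y: "\<And>j. j < t \<Longrightarrow> Yv j \<in> S \<Longrightarrow> Zv \<in> S"
  proof -
    fix j assume j: "j < t" "Yv j \<in> S"
    obtain u where u: "u \<in> S" "E (Xv j) u" using dom inV(3)[OF j(1)] by blast
    have bx: "E (Cv K) (Yv j)" using j unfolding E_Cv by auto
    have "u \<noteq> Bv K"
    proof
      assume "u = Bv K"
      moreover have "E (Cv K) (Bv K)" unfolding E_Cv by auto
      ultimately show False using oneC[of K "Bv K" "Yv j"] u j bx by auto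
    qed
    moreover have "\<And>i. i < t \<Longrightarrow> i \<noteq> j \<Longrightarrow> u \<noteq> Yv i"
    proof
      fix i assume i: "i < t" "i \<noteq> j" "u = Yv i"
      moreover have "E (Cv K) (Yv i)" using i unfolding E_Cv by auto
      ultimately show False using oneC[of K "Yv i" "Yv j"] u j bx by auto
    qed
    ultimately show "Zv \<in> S" using u nV unfolding E_Xv by auto
  qed
  obtain a where a: "a \<in> S" "E Vv a" using dom inV(4) by blast
  show False
  proof (cases d)
    case False
    have "Zv \<notin> S" using SV False by (auto simp: VS_def)
    then show False using a st1 st2X st2Y False unfolding E_Vv by auto
  next
    case True
    have K0: "0 < K" "1 < K" "2 < K" using K3 by auto
    have T1: "Pv 1 \<in> S \<or> Qv 1 \<in> S \<Longrightarrow> Qv 0 \<in> S"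
    proof -
      assume h: "Pv 1 \<in> S \<or> Qv 1 \<in> S"
      show "Qv 0 \<in> S"
      proof (cases "Pv 1 \<in> S")
        case True
        obtain u where u: "u \<in> S" "E (Qv 1) u" using dom inV(2)[OF K0(2)] by blast
        have "E (Bv 1) (Pv 1)" "E (Bv 1) (Cv 1)" using K0 unfolding E_Bv by auto
        then have "Cv 1 \<notin> S" using oneB[of 1 "Pv 1" "Cv 1"] True K0 by auto
        then show ?thesis using u nV \<open>d\<close> K0 unfolding E_Qv by auto
      next
        case False
        then have q: "Qv 1 \<in> S" using h by auto
        obtain u where u: "u \<in> S" "E (Pv 1) u" using dom inV(2)[OF K0(2)] by blast
        have "E (Cv 1) (Qv 1)" "E (Cv 1) (Bv 1)" using K0 unfolding E_Cv by auto
        then have "Bv 1 \<notin> S" using oneC[of 1 "Qv 1" "Bv 1"] q K0 by auto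
        then show ?thesis using u nV \<open>d\<close> K0 unfolding E_Pv by auto
      qed
    qed
    have T2: "Pv 2 \<in> S \<or> Qv 2 \<in> S \<Longrightarrow> Pv 0 \<in> S"
    proof -
      assume h: "Pv 2 \<in> S \<or> Qv 2 \<in> S"
      show "Pv 0 \<in> S"
      proof (cases "Pv 2 \<in> S")
        case True
        obtain u where u: "u \<in> S" "E (Qv 2) u" using dom inV(2)[OF K0(3)] by blast
        have "E (Bv 2) (Pv 2)" "E (Bv 2) (Cv 2)" using K0 unfolding E_Bv by auto
        then have "Cv 2 \<notin> S" using oneB[of 2 "Pv 2" "Cv 2"] True K0 by auto
        then show ?thesis using u nV \<open>d\<close> K0 unfolding E_Qv by auto
      next
        case False
        then have q: "Qv 2 \<in> S" using h by auto
        obtain u where u: "u \<in> S" "E (Pv 2) u" using dom inV(2)[OF K0(3)] by blast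
        have "E (Cv 2) (Qv 2)" "E (Cv 2) (Bv 2)" using K0 unfolding E_Cv by auto
        then have "Bv 2 \<notin> S" using oneC[of 2 "Qv 2" "Bv 2"] q K0 by auto
        then show ?thesis using u nV \<open>d\<close> K0 unfolding E_Pv by auto
      qed
    qed
    have ZV: "Zv \<in> V" using True by (simp add: VS_def)
    have EB0: "E (Bv 0) Zv" "E (Bv 0) (Pv 0)" "E (Bv 0) (Cv 0)" "E (Cv 0) (Qv 0)" "E (Cv 0) (Bv 0)"
      using K0 True unfolding E_Bv E_Cv by auto
    have nZ: "Zv \<notin> S"
    proof
      assume z: "Zv \<in> S"
      have "Pv 0 \<notin> S" using oneB[of 0 Zv "Pv 0"] z EB0 by auto
      have "Cv 0 \<notin> S" using oneB[of 0 Zv "Cv 0"] z EB0 by auto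
      obtain u where u: "u \<in> S" "E (Qv 0) u" using dom inV(2)[OF K0(1)] by blast
      then have "Pv 1 \<in> S \<or> Qv 1 \<in> S" using \<open>Cv 0 \<notin> S\<close> nV True unfolding E_Qv by auto
      then have "Qv 0 \<in> S" by (rule T1)
      then have "Bv 0 \<notin> S" using oneC[of 0 "Qv 0" "Bv 0"] EB0 by auto
      obtain u' where u': "u' \<in> S" "E (Pv 0) u'" using dom inV(2)[OF K0(1)] by blast
      then have "Pv 2 \<in> S \<or> Qv 2 \<in> S" using \<open>Bv 0 \<notin> S\<close> nV True unfolding E_Pv by auto
      then have "Pv 0 \<in> S" by (rule T2)
      then show False using \<open>Pv 0 \<notin> S\<close> by simp
    qed
    have ncr: "\<And>j. j < t \<Longrightarrow> Xv j \<notin> S \<and> Yv j \<notin> S" using st2X st2Y nZ by blast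
    have zdom: "Bv 0 \<in> S"
    proof -
      obtain u where u: "u \<in> S" "E Zv u" using dom ZV by blast
      then show ?thesis using ncr nV unfolding E_Zv by auto
    qed
    have nQ0: "Qv 0 \<notin> S" using oneC[of 0 "Qv 0" "Bv 0"] EB0 zdom by auto
    have nP0: "Pv 0 \<notin> S"
    proof
      assume p: "Pv 0 \<in> S"
      have "Cv 0 \<notin> S" using oneB[of 0 "Pv 0" "Cv 0"] p EB0 by auto
      obtain u where u: "u \<in> S" "E (Qv 0) u" using dom inV(2)[OF K0(1)] by blast
      then have "Pv 1 \<in> S \<or> Qv 1 \<in> S" using \<open>Cv 0 \<notin> S\<close> nV True unfolding E_Qv by auto
      then have "Qv 0 \<in> S" by (rule T1)
      then show False using nQ0 by simp
    qed
    have n12: "Pv 1 \<notin> S" "Qv 1 \<notin> S" "Pv 2 \<notin> S" "Qv 2 \<notin> S" using T1 T2 nQ0 nP0 by auto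
    have "\<And>i. i < K \<Longrightarrow> Pv i \<notin> S \<and> Qv i \<notin> S"
    proof -
      fix i assume i: "i < K"
      show "Pv i \<notin> S \<and> Qv i \<notin> S"
      proof (cases "3 \<le> i")
        case True then show ?thesis using st1 i by blast
      next
        case False then have "i = 0 \<or> i = 1 \<or> i = 2" by auto
        then show ?thesis using n12 nP0 nQ0 by auto
      qed
    qed
    then show False using a ncr nZ unfolding E_Vv by auto
  qed
qed

end


context cons begin

lemma BCV: "BC \<subseteq> V" by (auto simp: BC_def VS_def)
lemma finBC: "finite BC" by (auto simp: BC_def)

lemma tds_lower:
  assumes td: "total_dominating V E S" shows "2*K + 3 \<le> card S"
proof -
  have SV: "S \<subseteq> V" and dom: "\<And>y. y \<in> V \<Longrightarrow> \<exists>u\<in>S. E y u" using td unfolding total_dominating_def by auto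
  have finS: "finite S" using SV finV finite_subset by blast
  define f where "f = (\<lambda>w. SOME u. u \<in> S \<and> E w u)"
  have f: "\<And>w. w \<in> BC \<Longrightarrow> f w \<in> S \<and> E w (f w)"
  proof -
    fix w assume "w \<in> BC"
    then have "\<exists>u. u \<in> S \<and> E w u" using dom BCV by blast
    then show "f w \<in> S \<and> E w (f w)" unfolding f_def by (rule someI_ex)
  qed
  have inj: "inj_on f BC"
  proof (rule inj_onI)
    fix w w' assume "w \<in> BC" "w' \<in> BC" "f w = f w'"
    then show "w = w'" using f[of w] f[of w'] uniqBC by metis
  qed
  have cf: "card (f ` BC) = 2*K+2" using card_image[OF inj] cardBC by simp
  have fS: "f ` BC \<subseteq> S" using f by auto
  have "\<not> S \<subseteq> f ` BC"
  proof
    assume sub: "S \<subseteq> f ` BC"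
    have nV: "Vv \<notin> S"
    proof
      assume "Vv \<in> S"
      then obtain w where "w \<in> BC" "f w = Vv" using sub by auto
      then have "E w Vv" using f by metis
      then have "E Vv w" using Esym by blast
      then show False using \<open>w \<in> BC\<close> unfolding E_Vv BC_def by auto
    qed
    have one: "\<And>w u1 u2. w \<in> BC \<Longrightarrow> u1 \<in> S \<Longrightarrow> u2 \<in> S \<Longrightarrow> E w u1 \<Longrightarrow> E w u2 \<Longrightarrow> u1 = u2"
    proof -
      fix w u1 u2 assume h: "w \<in> BC" "u1 \<in> S" "u2 \<in> S" "E w u1" "E w u2"
      obtain w1 where w1: "w1 \<in> BC" "u1 = f w1" using sub h by auto
      obtain w2 where w2: "w2 \<in> BC" "u2 = f w2" using sub h by auto
      have "w = w1" using uniqBC[of w w1 u1] h w1 f by auto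
      moreover have "w = w2" using uniqBC[of w w2 u2] h w2 f by auto
      ultimately show "u1 = u2" using w1 w2 by simp
    qed
    show False by (rule no_small[OF SV nV one dom]) auto
  qed
  then obtain s where s: "s \<in> S" "s \<notin> f ` BC" by auto
  have "card (insert s (f ` BC)) \<le> card S" using s fS finS by (intro card_mono) auto
  moreover have "card (insert s (f ` BC)) = 2*K+3" using s cf finBC by simp
  ultimately show ?thesis by simp
qed

lemma tds0: "total_dominating V E (insert (Pv 0) BC)"
  unfolding total_dominating_def
proof (intro conjI ballI)
  show "insert (Pv 0) BC \<subseteq> V" using BCV K3 by (auto simp: VS_def)
  fix y assume y: "y \<in> V"
  show "\<exists>u\<in>insert (Pv 0) BC. E y u"
  proof (cases y)
    case Vv have "E Vv (Pv 0)" using K3 unfolding E_Vv by auto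
    then show ?thesis using Vv by auto
  next
    case Zv have "E Zv (Bv 0)" using y Zv unfolding E_Zv by (auto simp: VS_def)
    then show ?thesis using Zv by (auto simp: BC_def)
  next
    case (Bv i) have "E (Bv i) (Cv i)" using y Bv unfolding E_Bv by (auto simp: VS_def)
    then show ?thesis using Bv y by (auto simp: BC_def VS_def)
  next
    case (Cv i) have "E (Cv i) (Bv i)" using y Cv unfolding E_Cv by (auto simp: VS_def)
    then show ?thesis using Cv y by (auto simp: BC_def VS_def)
  next
    case (Pv i) have "E (Pv i) (Bv i)" using y Pv unfolding E_Pv by (auto simp: VS_def)
    then show ?thesis using Pv y by (auto simp: BC_def VS_def)
  next
    case (Qv i) have "E (Qv i) (Cv i)" using y Qv unfolding E_Qv by (auto simp: VS_def)
    then show ?thesis using Qv y by (auto simp: BC_def VS_def)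
  next
    case (Xv i) have "E (Xv i) (Bv K)" using y Xv unfolding E_Xv by (auto simp: VS_def)
    then show ?thesis using Xv y by (auto simp: BC_def VS_def)
  next
    case (Yv i) have "E (Yv i) (Cv K)" using y Yv unfolding E_Yv by (auto simp: VS_def)
    then show ?thesis using Yv y by (auto simp: BC_def VS_def)
  qed
qed

lemma gamma: "gamma_t V E = 2*K + 3"
  unfolding gamma_t_def
proof (rule Least_equality)
  have "Pv 0 \<notin> BC" by (auto simp: BC_def)
  then have "card (insert (Pv 0) BC) = 2*K+3"
    using cardBC finBC by simp
  then show "\<exists>S. total_dominating V E S \<and> card S = 2*K+3" using tds0 by blast
next
  fix y assume "\<exists>S. total_dominating V E S \<and> card S = y"
  then show "2*K+3 \<le> y" using tds_lower by blast
qed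

end


context cons begin

lemma crit_gen:
  assumes SV: "S \<subseteq> V - {x}" and cS: "card S \<le> 2*K+2" and dom: "\<And>y. y \<in> V \<Longrightarrow> y \<noteq> x \<Longrightarrow> \<exists>u\<in>S. E y u"
  shows "gamma_t (fst (del_vertex V E x)) (snd (del_vertex V E x)) < gamma_t V E"
proof -
  have "total_dominating (V - {x}) (\<lambda>a b. E a b \<and> a \<noteq> x \<and> b \<noteq> x) S"
    unfolding total_dominating_def using SV dom by fastforce
  then have "gamma_t (V - {x}) (\<lambda>a b. E a b \<and> a \<noteq> x \<and> b \<noteq> x) \<le> card S"
    unfolding gamma_t_def by (metis (mono_tags, lifting) Least_le)
  then show ?thesis using cS gamma unfolding del_vertex_def by simp
qed

lemma crit_Vv: "gamma_t (fst (del_vertex V E Vv)) (snd (del_vertex V E Vv)) < gamma_t V E"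
proof (rule crit_gen[of BC])
  show "BC \<subseteq> V - {Vv}" using BCV by (auto simp: BC_def)
  show "card BC \<le> 2*K+2" using cardBC by simp
  fix y assume "y \<in> V" "y \<noteq> Vv"
  then show "\<exists>u\<in>BC. E y u" by (cases y) (auto simp: E_simps BC_def VS_def)
qed

lemma card_BC_minus2: "i \<le> K \<Longrightarrow> card (BC - {Bv i, Cv i}) = 2*K"
proof -
  assume i: "i \<le> K"
  have "{Bv i, Cv i} \<subseteq> BC" using i by (auto simp: BC_def)
  then have "card (BC - {Bv i, Cv i}) = card BC - card {Bv i, Cv i}" using finBC by (simp add: card_Diff_subset)
  then show ?thesis using cardBC by simp
qed

lemma card_BC_minus1: "w \<in> BC \<Longrightarrow> card (BC - {w}) = 2*K+1"
  using cardBC finBC by simp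

lemma card_ins_le: "finite A \<Longrightarrow> card (insert a A) \<le> card A + 1"
  by (simp add: card_insert_le_m1 card_insert_if)

lemma crit_Bv: assumes x: "Bv i \<in> V" shows "gamma_t (fst (del_vertex V E (Bv i))) (snd (del_vertex V E (Bv i))) < gamma_t V E"
proof (rule crit_gen[of "insert Vv (insert (if i < K then Qv i else Yv 0) (BC - {Bv i, Cv i}))"])
  have i: "i \<le> K" using x by (simp add: VS_def)
  show "insert Vv (insert (if i < K then Qv i else Yv 0) (BC - {Bv i, Cv i})) \<subseteq> V - {Bv i}"
    using BCV i t1 by (auto simp: BC_def VS_def)
  have "card (insert Vv (insert (if i < K then Qv i else Yv 0) (BC - {Bv i, Cv i}))) \<le> card (BC - {Bv i, Cv i}) + 1 + 1"
    using finBC by (meson card_ins_le finite_Diff finite_insert le_trans add_le_mono1)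
  then show "card (insert Vv (insert (if i < K then Qv i else Yv 0) (BC - {Bv i, Cv i}))) \<le> 2*K+2"
    using card_BC_minus2[OF i] by simp
  fix y assume "y \<in> V" "y \<noteq> Bv i"
  then show "\<exists>u\<in>insert Vv (insert (if i < K then Qv i else Yv 0) (BC - {Bv i, Cv i})). E y u"
    using i t1 by (cases y; cases "i < K") (auto simp: E_simps BC_def VS_def)
qed

lemma crit_Cv: assumes x: "Cv i \<in> V" shows "gamma_t (fst (del_vertex V E (Cv i))) (snd (del_vertex V E (Cv i))) < gamma_t V E"
proof (rule crit_gen[of "insert Vv (insert (if i < K then Pv i else Xv 0) (BC - {Bv i, Cv i}))"])
  have i: "i \<le> K" using x by (simp add: VS_def)
  show "insert Vv (insert (if i < K then Pv i else Xv 0) (BC - {Bv i, Cv i})) \<subseteq> V - {Cv i}"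
    using BCV i t1 by (auto simp: BC_def VS_def)
  have "card (insert Vv (insert (if i < K then Pv i else Xv 0) (BC - {Bv i, Cv i}))) \<le> card (BC - {Bv i, Cv i}) + 1 + 1"
    using finBC by (meson card_ins_le finite_Diff finite_insert le_trans add_le_mono1)
  then show "card (insert Vv (insert (if i < K then Pv i else Xv 0) (BC - {Bv i, Cv i}))) \<le> 2*K+2"
    using card_BC_minus2[OF i] by simp
  fix y assume "y \<in> V" "y \<noteq> Cv i"
  then show "\<exists>u\<in>insert Vv (insert (if i < K then Pv i else Xv 0) (BC - {Bv i, Cv i})). E y u"
    using i t1 by (cases y; cases "i < K") (auto simp: E_simps BC_def VS_def)
qed

lemma crit_ins:
  assumes w: "w \<in> BC" and a: "a \<in> V" "a \<notin> BC" "a \<noteq> x" "w \<noteq> x" and xV: "x \<notin> BC"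
    and dom: "\<And>y. y \<in> V \<Longrightarrow> y \<noteq> x \<Longrightarrow> \<exists>u\<in>insert a (BC - {w}). E y u"
  shows "gamma_t (fst (del_vertex V E x)) (snd (del_vertex V E x)) < gamma_t V E"
proof (rule crit_gen[of "insert a (BC - {w})"])
  show "insert a (BC - {w}) \<subseteq> V - {x}" using BCV a xV by auto
  show "card (insert a (BC - {w})) \<le> 2*K+2" using card_BC_minus1[OF w] finBC card_ins_le[of "BC - {w}" a] by simp
qed (rule dom)

lemma crit_Qv: assumes x: "Qv i \<in> V" shows "gamma_t (fst (del_vertex V E (Qv i))) (snd (del_vertex V E (Qv i))) < gamma_t V E"
proof (rule crit_ins[of "Cv i" "Pv i"])
  have i: "i < K" using x by (simp add: VS_def)
  show "Cv i \<in> BC" "Pv i \<in> V" "Pv i \<notin> BC" "Pv i \<noteq> Qv i" "Cv i \<noteq> Qv i" "Qv i \<notin> BC"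
    using i by (auto simp: BC_def VS_def)
  fix y assume "y \<in> V" "y \<noteq> Qv i"
  then show "\<exists>u\<in>insert (Pv i) (BC - {Cv i}). E y u"
    using i by (cases y) (auto simp: E_simps BC_def VS_def)
qed

lemma crit_Xv: assumes x: "Xv i \<in> V" shows "gamma_t (fst (del_vertex V E (Xv i))) (snd (del_vertex V E (Xv i))) < gamma_t V E"
proof (rule crit_ins[of "Bv K" "Yv i"])
  have i: "i < t" using x by (simp add: VS_def)
  show "Bv K \<in> BC" "Yv i \<in> V" "Yv i \<notin> BC" "Yv i \<noteq> Xv i" "Bv K \<noteq> Xv i" "Xv i \<notin> BC"
    using i by (auto simp: BC_def VS_def)
  fix y assume "y \<in> V" "y \<noteq> Xv i"
  then show "\<exists>u\<in>insert (Yv i) (BC - {Bv K}). E y u"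
    using i K3 by (cases y) (auto simp: E_simps BC_def VS_def)
qed

lemma crit_Yv: assumes x: "Yv i \<in> V" shows "gamma_t (fst (del_vertex V E (Yv i))) (snd (del_vertex V E (Yv i))) < gamma_t V E"
proof (rule crit_ins[of "Cv K" "Xv i"])
  have i: "i < t" using x by (simp add: VS_def)
  show "Cv K \<in> BC" "Xv i \<in> V" "Xv i \<notin> BC" "Xv i \<noteq> Yv i" "Cv K \<noteq> Yv i" "Yv i \<notin> BC"
    using i by (auto simp: BC_def VS_def)
  fix y assume "y \<in> V" "y \<noteq> Yv i"
  then show "\<exists>u\<in>insert (Xv i) (BC - {Cv K}). E y u"
    using i K3 by (cases y) (auto simp: E_simps BC_def VS_def)
qed

lemma crit_Pv_gen: assumes x: "Pv i \<in> V" and nd: "\<not> (d \<and> i = 0)"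
  shows "gamma_t (fst (del_vertex V E (Pv i))) (snd (del_vertex V E (Pv i))) < gamma_t V E"
proof (rule crit_ins[of "Bv i" "Qv i"])
  have i: "i < K" using x by (simp add: VS_def)
  show "Bv i \<in> BC" "Qv i \<in> V" "Qv i \<notin> BC" "Qv i \<noteq> Pv i" "Bv i \<noteq> Pv i" "Pv i \<notin> BC"
    using i by (auto simp: BC_def VS_def)
  fix y assume "y \<in> V" "y \<noteq> Pv i"
  then show "\<exists>u\<in>insert (Qv i) (BC - {Bv i}). E y u"
    using i nd by (cases y) (auto simp: E_simps BC_def VS_def)
qed

end


context cons begin

lemma card4: "F \<subseteq> BC \<Longrightarrow> card F = 4 \<Longrightarrow> card G \<le> 4 \<Longrightarrow> finite G \<Longrightarrow> card ((BC - F) \<union> G) \<le> 2*K+2"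
proof -
  assume h: "F \<subseteq> BC" "card F = 4" "card G \<le> 4" "finite G"
  have "card (BC - F) = card BC - card F" using h finBC by (meson card_Diff_subset finite_subset)
  then have "card (BC - F) = 2*K+2 - 4" using h cardBC by simp
  then have "card ((BC - F) \<union> G) \<le> 2*K+2-4 + 4" using card_Un_le[of "BC - F" G] h by simp
  then show ?thesis using K3 by simp
qed

lemma crit_P0: assumes dd: d shows "gamma_t (fst (del_vertex V E (Pv 0))) (snd (del_vertex V E (Pv 0))) < gamma_t V E"
proof (rule crit_gen[of "(BC - {Bv 0, Cv 0, Bv 1, Bv K}) \<union> {Zv, Qv 0, Qv 1, Yv 0}"])
  show "(BC - {Bv 0, Cv 0, Bv 1, Bv K}) \<union> {Zv, Qv 0, Qv 1, Yv 0} \<subseteq> V - {Pv 0}"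
    using BCV K3 t1 dd by (auto simp: BC_def VS_def)
  show "card ((BC - {Bv 0, Cv 0, Bv 1, Bv K}) \<union> {Zv, Qv 0, Qv 1, Yv 0}) \<le> 2*K+2"
    by (rule card4) (use K3 in \<open>auto simp: BC_def card_insert_if\<close>)
  fix y assume "y \<in> V" "y \<noteq> Pv 0"
  then show "\<exists>u\<in>(BC - {Bv 0, Cv 0, Bv 1, Bv K}) \<union> {Zv, Qv 0, Qv 1, Yv 0}. E y u"
    using K3 t1 dd by (cases y) (auto simp: E_simps BC_def VS_def)
qed

lemma crit_Zv: assumes dd: d shows "gamma_t (fst (del_vertex V E Zv)) (snd (del_vertex V E Zv)) < gamma_t V E"
proof (rule crit_gen[of "(BC - {Bv 0, Cv 0, Bv 1, Bv 2}) \<union> {Pv 0, Qv 0, Qv 1, Qv 2}"])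
  show "(BC - {Bv 0, Cv 0, Bv 1, Bv 2}) \<union> {Pv 0, Qv 0, Qv 1, Qv 2} \<subseteq> V - {Zv}"
    using BCV K3 t1 dd by (auto simp: BC_def VS_def)
  show "card ((BC - {Bv 0, Cv 0, Bv 1, Bv 2}) \<union> {Pv 0, Qv 0, Qv 1, Qv 2}) \<le> 2*K+2"
    by (rule card4) (use K3 in \<open>auto simp: BC_def card_insert_if\<close>)
  fix y assume "y \<in> V" "y \<noteq> Zv"
  then show "\<exists>u\<in>(BC - {Bv 0, Cv 0, Bv 1, Bv 2}) \<union> {Pv 0, Qv 0, Qv 1, Qv 2}. E y u"
    using K3 t1 dd by (cases y) (auto simp: E_simps BC_def VS_def)
qed

lemma critical: "gamma_t_critical V E"
  unfolding gamma_t_critical_def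
proof (intro conjI ballI impI)
  show "no_isolated V E" unfolding no_isolated_def
    using two_nb sg unfolding simple_graph_def by blast
  fix x assume x: "x \<in> V"
  show "gamma_t (fst (del_vertex V E x)) (snd (del_vertex V E x)) < gamma_t V E"
  proof (cases x)
    case Vv then show ?thesis using crit_Vv by simp
  next
    case Zv then have d using x by (simp add: VS_def)
    then show ?thesis using crit_Zv Zv by simp
  next
    case (Bv i) then show ?thesis using crit_Bv x by simp
  next
    case (Cv i) then show ?thesis using crit_Cv x by simp
  next
    case (Pv i) then show ?thesis
    proof (cases "d \<and> i = 0")
      case True then show ?thesis using crit_P0 Pv by simp
    next
      case False then show ?thesis using crit_Pv_gen x Pv by simp
    qed
  next
    case (Qv i) then show ?thesis using crit_Qv x by simp
  next
    case (Xv i) then show ?thesis using crit_Xv x by simp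
  next
    case (Yv i) then show ?thesis using crit_Yv x by simp
  qed
qed

lemma main_cons: "simple_graph V E \<and> m_gamma_t_critical (2*K+3) V E \<and> card V = max_degree V E + (2*K+3)
   \<and> max_degree V E = Dl \<and> min_degree V E \<ge> 2"
  using sg critical gamma cardV maxdeg mindeg unfolding m_gamma_t_critical_def by simp

end


instance vtx :: countable by countable_datatype

theorem mainTheorem9:
  fixes m \<Delta> :: nat
  assumes "odd m" and "m \<ge> 9" and "\<Delta> \<ge> 1"
  shows "(\<exists>(V :: nat set) E. simple_graph V E \<and> m_gamma_t_critical m V E
            \<and> card V = max_degree V E + m \<and> max_degree V E = \<Delta>
            \<and> min_degree V E \<ge> 2)
         \<longleftrightarrow> \<Delta> \<ge> m - 1"
proof
  assume "\<exists>(V :: nat set) E. simple_graph V E \<and> m_gamma_t_critical m V E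
            \<and> card V = max_degree V E + m \<and> max_degree V E = \<Delta>
            \<and> min_degree V E \<ge> 2"
  then obtain V :: "nat set" and E where h: "simple_graph V E" "m_gamma_t_critical m V E"
     "card V = max_degree V E + m" "max_degree V E = \<Delta>" "min_degree V E \<ge> 2" by blast
  show "\<Delta> \<ge> m - 1" using only_if[OF h(1,2,3,5)] assms h(4) by simp
next
  assume D: "\<Delta> \<ge> m - 1"
  define K where "K = (m - 3) div 2"
  have mK: "m = 2*K + 3" using assms unfolding K_def by (auto elim!: oddE)
  have K3: "K \<ge> 3" using assms mK by simp
  define d where "d = odd \<Delta>"
  define t where "t = (\<Delta> - 2*K - (if d then 1 else 0)) div 2"
  have tD: "t \<ge> 1 \<and> 2*K + 2*t + (if d then 1 else 0) = \<Delta>"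
  proof (cases d)
    case True
    then have "odd \<Delta>" unfolding d_def by simp
    then obtain r where r: "\<Delta> = 2*r + 1" by (auto elim!: oddE)
    then have "r \<ge> K + 1" using D mK by simp
    then show ?thesis using True r unfolding t_def by auto
  next
    case False
    then have "even \<Delta>" unfolding d_def by simp
    then obtain r where r: "\<Delta> = 2*r" by (auto elim!: evenE)
    then have "r \<ge> K + 1" using D mK by simp
    then show ?thesis using False r unfolding t_def by auto
  qed
  then have t1: "t \<ge> 1" and Dl: "2*K + 2*t + (if d then 1 else 0) = \<Delta>" by auto
  interpret c: cons K t d using K3 t1 by unfold_locales
  have M: "simple_graph (VS K t d) (EE K t d) \<and> m_gamma_t_critical m (VS K t d) (EE K t d)
     \<and> card (VS K t d) = max_degree (VS K t d) (EE K t d) + m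
     \<and> max_degree (VS K t d) (EE K t d) = \<Delta> \<and> min_degree (VS K t d) (EE K t d) \<ge> 2"
    using c.main_cons Dl unfolding c.Dl_def mK by simp
  let ?f = "to_nat :: vtx \<Rightarrow> nat"
  have inj: "inj ?f" by simp
  let ?V = "?f ` VS K t d" and ?E = "trE ?f (EE K t d)"
  have "simple_graph ?V ?E" using sg_tr[OF inj] M by blast
  moreover have "m_gamma_t_critical m ?V ?E"
    using M crit_tr[OF inj] gamma_tr[OF inj] unfolding m_gamma_t_critical_def by metis
  moreover have "max_degree ?V ?E = max_degree (VS K t d) (EE K t d)"
    unfolding max_degree_def using degs_tr[OF inj] by metis
  moreover have "min_degree ?V ?E = min_degree (VS K t d) (EE K t d)"
    unfolding min_degree_def using degs_tr[OF inj] by metis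
  moreover have "card ?V = card (VS K t d)" using inj by (simp add: card_image inj_on_subset)
  ultimately show "\<exists>(V :: nat set) E. simple_graph V E \<and> m_gamma_t_critical m V E
            \<and> card V = max_degree V E + m \<and> max_degree V E = \<Delta>
            \<and> min_degree V E \<ge> 2" using M by metis
qed


end
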